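(* For any input distribution $\mathcal{D}$, and any $n,k\ge1$, $p\in[0,1]$, there is a deterministic selection algorithm in the rank query model that runs in $k$ rounds, has success probability at least $p$, and issues at most $np\bigl(1-\frac{k-1}{2k}p\bigr)+1$ queries in expectation when the input is drawn from $\mathcal{D}$.
   Context: Selection with rank queries: there is a vector $\vec{x}=(x_1,\ldots,x_n)$ whose ranks form a permutation of $\{1,\ldots,n\}$; a rank $r\in\{1,\ldots,n\}$ is given and the goal is to output the index $i$ with $\mathrm{rank}(x_i)=r$. Queries have the form "How is $\mathrm{rank}(x_j)$ compared to $m$?", with answer "$<$", "$=$" or "$>$". An algorithm runs in $k$ rounds if in each of $k$ rounds it submits a set of queries chosen depending only on answers of earlier rounds, then receives all answers. An input distribution is a probability distribution over rank permutations (with $r$ given); the algorithm may depend on $\mathcal{D}$. *)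

theory Defs
  imports "HOL-Probability.Probability" "HOL-Combinatorics.Permutations"
begin

text \<open>Rank query model. An input is a rank permutation sigma of {1..n}
  (sigma i = rank of x_i). A query (j, m) asks how rank(x_j) compares to m.\<close>

datatype cmp = Lt | Eq | Gt

definition answer :: "(nat \<Rightarrow> nat) \<Rightarrow> nat \<times> nat \<Rightarrow> cmp" where
  "answer \<sigma> q = (if \<sigma> (fst q) < snd q then Lt else if \<sigma> (fst q) = snd q then Eq else Gt)"

text \<open>A history lists, for each completed round, the answers to the queries of that
  round (None for pairs not queried in that round).\<close>
type_synonym history = "((nat \<times> nat) \<Rightarrow> cmp option) list"

record algorithm =
  alg_queries :: "history \<Rightarrow> (nat \<times> nat) set"
  alg_output :: "history \<Rightarrow> nat"

fun hist :: "algorithm \<Rightarrow> (nat \<Rightarrow> nat) \<Rightarrow> nat \<Rightarrow> history" where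
  "hist A \<sigma> 0 = []"
| "hist A \<sigma> (Suc t) =
     (let h = hist A \<sigma> t; Q = alg_queries A h
      in h @ [(\<lambda>q. if q \<in> Q then Some (answer \<sigma> q) else None)])"

definition valid_alg :: "nat \<Rightarrow> algorithm \<Rightarrow> bool" where
  "valid_alg n A \<longleftrightarrow> (\<forall>h. finite (alg_queries A h) \<and> fst ` alg_queries A h \<subseteq> {1..n})"

definition num_queries :: "algorithm \<Rightarrow> nat \<Rightarrow> (nat \<Rightarrow> nat) \<Rightarrow> nat" where
  "num_queries A k \<sigma> = (\<Sum>t<k. card (alg_queries A (hist A \<sigma> t)))"

definition succeeds :: "algorithm \<Rightarrow> nat \<Rightarrow> nat \<Rightarrow> nat \<Rightarrow> (nat \<Rightarrow> nat) \<Rightarrow> bool" where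
  "succeeds A n k r \<sigma> \<longleftrightarrow>
     (let i = alg_output A (hist A \<sigma> k) in i \<in> {1..n} \<and> \<sigma> i = r)"

end

theory Submission
  imports Defs
begin

definition found :: "nat \<Rightarrow> history \<Rightarrow> bool" where
  "found r h \<longleftrightarrow> (\<exists>f\<in>set h. \<exists>j. f (j, r) = Some Eq)"

definition alg :: "(nat \<Rightarrow> nat) \<Rightarrow> (nat \<Rightarrow> nat) \<Rightarrow> nat \<Rightarrow> algorithm" where
  "alg \<pi> m r = \<lparr>alg_queries = (\<lambda>h. if found r h then {}
       else (\<lambda>i. (\<pi> i, r)) ` {m (length h)..<m (Suc (length h))}),
     alg_output = (\<lambda>h. SOME j. \<exists>f\<in>set h. f (j, r) = Some Eq)\<rparr>"

lemma hist_len[simp]: "length (hist A \<sigma> t) = t"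
  by (induction t) (simp_all add: Let_def)

lemma found_snoc: "found r (h @ [f]) \<longleftrightarrow> found r h \<or> (\<exists>j. f (j,r) = Some Eq)"
  by (auto simp: found_def)

lemma hist_found:
  assumes "mono m" "m 0 = 0"
  shows "found r (hist (alg \<pi> m r) \<sigma> t) \<longleftrightarrow> (\<exists>i<m t. \<sigma> (\<pi> i) = r)"
proof (induction t)
  case 0
  show ?case using assms by (simp add: found_def)
next
  case (Suc t)
  let ?h = "hist (alg \<pi> m r) \<sigma> t"
  have "found r (hist (alg \<pi> m r) \<sigma> (Suc t)) \<longleftrightarrow>
     found r ?h \<or> (\<not> found r ?h \<and> (\<exists>i\<in>{m t..<m (Suc t)}. \<sigma> (\<pi> i) = r))"
    by (auto simp: Let_def found_snoc alg_def answer_def image_iff split: if_splits)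
  also have "\<dots> \<longleftrightarrow> (\<exists>i<m t. \<sigma> (\<pi> i) = r) \<or> (\<exists>i\<in>{m t..<m (Suc t)}. \<sigma> (\<pi> i) = r)"
    using Suc.IH by blast
  also have "\<dots> \<longleftrightarrow> (\<exists>i<m (Suc t). \<sigma> (\<pi> i) = r)"
  proof -
    have "m t \<le> m (Suc t)" using assms(1) by (simp add: monoD)
    show ?thesis
    proof
      assume "(\<exists>i<m t. \<sigma> (\<pi> i) = r) \<or> (\<exists>i\<in>{m t..<m (Suc t)}. \<sigma> (\<pi> i) = r)"
      then show "\<exists>i<m (Suc t). \<sigma> (\<pi> i) = r"
        using \<open>m t \<le> m (Suc t)\<close> by (auto dest: order.strict_trans2)
    next
      assume "\<exists>i<m (Suc t). \<sigma> (\<pi> i) = r"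
      then obtain i where "i < m (Suc t)" "\<sigma> (\<pi> i) = r" by blast
      then show "(\<exists>i<m t. \<sigma> (\<pi> i) = r) \<or> (\<exists>i\<in>{m t..<m (Suc t)}. \<sigma> (\<pi> i) = r)"
        by (cases "i < m t") auto
    qed
  qed
  finally show ?case .
qed

lemma hist_sound:
  assumes "\<forall>t. \<forall>i\<in>{m t..<m (Suc t)}. \<pi> i \<in> {1..n}"
  shows "f \<in> set (hist (alg \<pi> m r) \<sigma> t) \<Longrightarrow> f q = Some c \<Longrightarrow> fst q \<in> {1..n} \<and> c = answer \<sigma> q"
proof (induction t arbitrary: f)
  case 0
  then show ?case by simp
next
  case (Suc t)
  let ?h = "hist (alg \<pi> m r) \<sigma> t"
  let ?Q = "alg_queries (alg \<pi> m r) ?h"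
  have Qs: "?Q \<subseteq> {1..n} \<times> UNIV"
    using assms by (auto simp: alg_def)
  have "f \<in> set ?h \<or> f = (\<lambda>q. if q \<in> ?Q then Some (answer \<sigma> q) else None)"
    using Suc.prems(1) by (simp add: Let_def) blast
  then show ?case
  proof
    assume "f \<in> set ?h"
    then show ?thesis using Suc.IH Suc.prems(2) by blast
  next
    assume fe: "f = (\<lambda>q. if q \<in> ?Q then Some (answer \<sigma> q) else None)"
    then have "q \<in> ?Q" "c = answer \<sigma> q" using Suc.prems(2) by (auto split: if_splits)
    then show ?thesis using Qs by (cases q) auto
  qed
qed

lemma hist_card:
  assumes "mono m" "m 0 = 0" "inj_on \<pi> {..<n}" "m (Suc t) \<le> n"
  shows "card (alg_queries (alg \<pi> m r) (hist (alg \<pi> m r) \<sigma> t)) =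
     (if \<exists>i<m t. \<sigma> (\<pi> i) = r then 0 else m (Suc t) - m t)"
proof -
  have "inj_on (\<lambda>i. (\<pi> i, r)) {m t..<m (Suc t)}"
    using assms(3,4) by (auto simp: inj_on_def)
  moreover have q: "alg_queries (alg \<pi> m r) h = (if found r h then {}
       else (\<lambda>i. (\<pi> i, r)) ` {m (length h)..<m (Suc (length h))})" for h
    by (simp add: alg_def)
  ultimately show ?thesis
    using hist_found[OF assms(1,2), of r \<pi> \<sigma> t]
    by (simp only: q hist_len) (auto simp: card_image)
qed

lemma arith_identity:
  fixes m :: "nat \<Rightarrow> real" and c N :: real
  assumes "m 0 = 0"
  shows "(\<Sum>t<K. (m (Suc t) - m t) * (1 - real t * c / N)) =
     m K - (c / N) * ((real K - 1) * m K - (\<Sum>t<K. m t))"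
proof (induction K)
  case 0
  then show ?case using assms by simp
next
  case (Suc K)
  then show ?case by (simp add: algebra_simps diff_divide_distrib)
qed

lemma arith_sum_bound:
  fixes m :: "nat \<Rightarrow> real" and c :: real
  assumes "m 0 = 0" "\<And>t. t \<le> k \<Longrightarrow> m t \<le> real t * c + 1"
  shows "1 \<le> K \<Longrightarrow> K \<le> k \<Longrightarrow> (\<Sum>t<K. m t) \<le> c * real K * (real K - 1) / 2 + real K - 1"
proof (induction K)
  case 0
  then show ?case by simp
next
  case (Suc K)
  show ?case
  proof (cases "K = 0")
    case True
    then show ?thesis using assms by simp
  next
    case False
    then have "(\<Sum>t<K. m t) \<le> c * real K * (real K - 1) / 2 + real K - 1"
      using Suc by simp
    moreover have "m K \<le> real K * c + 1" using assms(2) Suc.prems by simp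
    moreover have "(\<Sum>t<Suc K. m t) = (\<Sum>t<K. m t) + m K" by simp
    moreover have "c * real (Suc K) * (real (Suc K) - 1) / 2 + real (Suc K) - 1
       = c * real K * (real K - 1) / 2 + real K - 1 + (real K * c + 1)"
      by (simp add: field_simps)
    ultimately show ?thesis by linarith
  qed
qed

lemma arith_bound:
  fixes m :: "nat \<Rightarrow> real" and c p :: real and n k :: nat
  assumes "k \<ge> 1" "n \<ge> 1" "0 \<le> p" "p \<le> 1" "c = real n * p / real k" "m 0 = 0"
    "\<And>t. t \<le> k \<Longrightarrow> m t \<le> real t * c + 1"
  shows "(\<Sum>t<k. (m (Suc t) - m t) * (1 - real t * c / real n))
     \<le> real n * p * (1 - (real k - 1) / (2 * real k) * p) + 1"
proof -
  define a where "a = p / real k"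
  have ca: "c / real n = a" using assms(2,5) by (simp add: a_def)
  have cna: "c = real n * a" using assms(2,5) by (simp add: a_def)
  have pa: "p = a * real k" using assms(1) by (simp add: a_def)
  have a0: "0 \<le> a" using assms(3) by (simp add: a_def)
  have coef: "0 \<le> 1 - a * (real k - 1)"
  proof -
    have "a * (real k - 1) \<le> a * real k" using a0 by (simp add: mult_left_mono)
    also have "\<dots> = p" using pa by simp
    finally show ?thesis using assms(4) by simp
  qed
  have S: "(\<Sum>t<k. m t) \<le> c * real k * (real k - 1) / 2 + real k - 1"
    using arith_sum_bound[of m k c k] assms by simp
  have M: "m k \<le> real n * a * real k + 1" using assms(7)[of k] cna by (simp add: algebra_simps)
  have "(\<Sum>t<k. (m (Suc t) - m t) * (1 - real t * c / real n))
      = m k * (1 - a * (real k - 1)) + a * (\<Sum>t<k. m t)"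
    using arith_identity[where m=m and c=c and N="real n" and K=k, OF assms(6)] ca by (simp add: algebra_simps)
  also have "\<dots> \<le> (real n * a * real k + 1) * (1 - a * (real k - 1))
      + a * (c * real k * (real k - 1) / 2 + real k - 1)"
    using mult_right_mono[OF M coef] mult_left_mono[OF S a0] by linarith
  also have "\<dots> = real n * p * (1 - (real k - 1) / (2 * real k) * p) + 1"
    using assms(1) unfolding cna pa by (simp add: field_simps)
  finally show ?thesis .
qed

lemma top_avg:
  fixes a :: "nat \<Rightarrow> real"
  assumes mono: "\<And>i j. i \<le> j \<Longrightarrow> j < n \<Longrightarrow> a j \<le> a i" and Mn: "M \<le> n"
  shows "real M * (\<Sum>i<n. a i) \<le> real n * (\<Sum>i<M. a i)"
proof -
  have split: "(\<Sum>i<n. a i) = (\<Sum>i<M. a i) + (\<Sum>j\<in>{M..<n}. a j)"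
    using Mn by (metis atLeast0LessThan sum.atLeastLessThan_concat zero_le)
  have "real M * (\<Sum>j\<in>{M..<n}. a j) = (\<Sum>i<M. \<Sum>j\<in>{M..<n}. a j)" by simp
  also have "\<dots> \<le> (\<Sum>i<M. \<Sum>j\<in>{M..<n}. a i)"
    by (intro sum_mono) (use mono in auto)
  also have "\<dots> = real (n - M) * (\<Sum>i<M. a i)" by (simp add: sum_distrib_left)
  also have "\<dots> = (real n - real M) * (\<Sum>i<M. a i)" using Mn by (simp add: of_nat_diff)
  finally have "real M * (\<Sum>j\<in>{M..<n}. a j) \<le> (real n - real M) * (\<Sum>i<M. a i)" .
  then show ?thesis unfolding split by (simp add: algebra_simps)
qed

theorem proposition9:
  fixes n k r :: nat and p :: real and D :: "(nat \<Rightarrow> nat) pmf"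
  assumes "n \<ge> 1" and "k \<ge> 1" and "0 \<le> p" and "p \<le> 1"
    and "r \<in> {1..n}"
    and "\<forall>\<sigma> \<in> set_pmf D. \<sigma> permutes {1..n}"
  shows "\<exists>A. valid_alg n A
    \<and> measure_pmf.prob D {\<sigma>. succeeds A n k r \<sigma>} \<ge> p
    \<and> measure_pmf.expectation D (\<lambda>\<sigma>. real (num_queries A k \<sigma>))
        \<le> real n * p * (1 - (real k - 1) / (2 * real k) * p) + 1"
proof -
  note perm = assms(6)
  define S where "S = set_pmf D"
  have finS: "finite S"
    using finite_subset[OF _ finite_permutations[of "{1..n::nat}"]] perm
    by (auto simp: S_def)
  define w where "w = pmf D"
  have w1: "(\<Sum>\<sigma>\<in>S. w \<sigma>) = 1" using sum_pmf_eq_1[of S D] finS by (simp add: S_def w_def)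
  have w0: "0 \<le> w \<sigma>" for \<sigma> by (simp add: w_def)
  define q where "q j = (\<Sum>\<sigma>\<in>S. w \<sigma> * (if \<sigma> j = r then 1 else 0))" for j
  define xs where "xs = sort_key (\<lambda>j. - q j) [1..<Suc n]"
  define \<pi> where "\<pi> i = xs ! i" for i
  have len: "length xs = n" by (simp add: xs_def)
  have setxs: "set xs = {1..n}" by (auto simp: xs_def)
  have dist: "distinct xs" by (simp add: xs_def)
  have \<pi>_in: "\<pi> i \<in> {1..n}" if "i < n" for i
    using that len setxs nth_mem unfolding \<pi>_def by blast
  have \<pi>_inj: "inj_on \<pi> {..<n}"
    using dist len by (simp add: inj_on_def \<pi>_def nth_eq_iff_index_eq)
  have \<pi>_surj: "\<exists>i<n. \<pi> i = j" if "j \<in> {1..n}" for j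
    using that len setxs unfolding \<pi>_def by (metis in_set_conv_nth)
  have \<pi>_sorted: "q (\<pi> j) \<le> q (\<pi> i)" if "i \<le> j" "j < n" for i j
  proof -
    have "sorted (map (\<lambda>j. - q j) xs)" unfolding xs_def by (rule sorted_sort_key)
    from sorted_nth_mono[OF this, of i j] that len
    show ?thesis by (simp add: \<pi>_def)
  qed
  define c where "c = real n * p / real k"
  have c0: "0 \<le> c" using assms by (simp add: c_def)
  define m where "m t = min n (nat \<lceil>real t * c\<rceil>)" for t
  have m0: "m 0 = 0" by (simp add: m_def)
  have mmono: "mono m"
  proof (rule monoI)
    fix t t' :: nat assume "t \<le> t'"
    then have "real t * c \<le> real t' * c" using c0 by (simp add: mult_right_mono)
    then show "m t \<le> m t'" unfolding m_def
      by (intro min.mono order.refl nat_mono ceiling_mono)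
  qed
  have m_le: "m t \<le> n" for t by (simp add: m_def)
  have m_bounds: "real t * c \<le> real (m t) \<and> real (m t) \<le> real t * c + 1" if "t \<le> k" for t
  proof -
    have "real t * c \<le> real k * c" using that c0 by (simp add: mult_right_mono)
    also have "\<dots> = real n * p" using assms(2) by (simp add: c_def)
    also have "\<dots> \<le> real n" using assms(4) by (simp add: mult_left_le)
    finally have tc: "real t * c \<le> real n" .
    have "0 \<le> real t * c" using c0 by simp
    then have ce0: "0 \<le> \<lceil>real t * c\<rceil>" by simp
    have "\<lceil>real t * c\<rceil> \<le> int n" using tc by (simp add: ceiling_le)
    then have "m t = nat \<lceil>real t * c\<rceil>" unfolding m_def by linarith
    then have "real (m t) = of_int \<lceil>real t * c\<rceil>" using ce0 by simp
    then show ?thesis using le_of_int_ceiling[of "real t * c"] of_int_ceiling_le_add_one[of "real t * c"]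
      by simp
  qed
  define e where "e \<sigma> M = (if \<exists>i<M. \<sigma> (\<pi> i) = r then 1 else 0 :: real)" for \<sigma> M
  have e_sum: "e \<sigma> M = (\<Sum>i<M. if \<sigma> (\<pi> i) = r then 1 else 0)" if "\<sigma> \<in> S" "M \<le> n" for \<sigma> M
  proof (cases "\<exists>i<M. \<sigma> (\<pi> i) = r")
    case True
    then obtain i0 where i0: "i0 < M" "\<sigma> (\<pi> i0) = r" by blast
    have injs: "inj \<sigma>" using perm that(1) by (auto simp: S_def permutes_inj)
    have "(\<Sum>i<M. if \<sigma> (\<pi> i) = r then 1 else 0) = (\<Sum>i<M. if i = i0 then 1 else (0::real))"
    proof (rule sum.cong)
      fix i assume "i \<in> {..<M}"
      then have "i < n" "i0 < n" using i0 that(2) by auto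
      then have "\<sigma> (\<pi> i) = r \<longleftrightarrow> i = i0"
        using i0 injs \<pi>_inj by (metis inj_on_def injD lessThan_iff)
      then show "(if \<sigma> (\<pi> i) = r then 1 else 0) = (if i = i0 then 1 else (0::real))" by simp
    qed simp
    also have "\<dots> = 1" using i0 by simp
    finally show ?thesis using True by (simp add: e_def)
  next
    case False
    then show ?thesis by (simp add: e_def)
  qed
  define F where "F M = (\<Sum>i<M. q (\<pi> i))" for M
  have F_eq: "(\<Sum>\<sigma>\<in>S. w \<sigma> * e \<sigma> M) = F M" if "M \<le> n" for M
  proof -
    have "(\<Sum>\<sigma>\<in>S. w \<sigma> * e \<sigma> M) = (\<Sum>\<sigma>\<in>S. \<Sum>i<M. w \<sigma> * (if \<sigma> (\<pi> i) = r then 1 else 0))"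
      using e_sum that by (simp add: sum_distrib_left)
    also have "\<dots> = F M" unfolding F_def q_def by (rule sum.swap)
    finally show ?thesis .
  qed
  have Fn: "F n = 1"
  proof -
    have "e \<sigma> n = 1" if "\<sigma> \<in> S" for \<sigma>
    proof -
      have pe: "\<sigma> permutes {1..n}" using perm that by (simp add: S_def)
      obtain j where j: "\<sigma> j = r" using permutes_surj[OF pe] by (metis surjD)
      have "j \<in> {1..n}" using permutes_in_image[OF pe, of j] j assms(5) by simp
      then obtain i where "i < n" "\<pi> i = j" using \<pi>_surj by blast
      then show ?thesis using j by (auto simp: e_def)
    qed
    then have "(\<Sum>\<sigma>\<in>S. w \<sigma> * e \<sigma> n) = 1" using w1 by simp
    then show ?thesis using F_eq by simp
  qed
  have F_lb: "real M / real n \<le> F M" if "M \<le> n" for M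
  proof -
    have "real M * F n \<le> real n * F M"
      unfolding F_def by (rule top_avg) (use \<pi>_sorted that in auto)
    then show ?thesis using Fn assms(1) by (simp add: divide_le_eq mult.commute)
  qed
  define A where "A = alg \<pi> m r"
  have sound_hyp: "\<forall>t. \<forall>i\<in>{m t..<m (Suc t)}. \<pi> i \<in> {1..n}"
    using \<pi>_in m_le by (meson atLeastLessThan_iff order_less_le_trans)
  have valid: "valid_alg n A"
    unfolding valid_alg_def A_def alg_def
    using sound_hyp by auto
  have succ: "succeeds A n k r \<sigma>" if "\<exists>i<m k. \<sigma> (\<pi> i) = r" for \<sigma>
  proof -
    let ?h = "hist A \<sigma> k"
    have "found r ?h" using hist_found[OF mmono m0] that by (simp add: A_def)
    then have ex: "\<exists>j. \<exists>f\<in>set ?h. f (j, r) = Some Eq" by (auto simp: found_def)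
    define j0 where "j0 = (SOME j. \<exists>f\<in>set ?h. f (j, r) = Some Eq)"
    have "\<exists>f\<in>set ?h. f (j0, r) = Some Eq" unfolding j0_def by (rule someI_ex[OF ex])
    then obtain f where f: "f \<in> set ?h" "f (j0, r) = Some Eq" by blast
    from hist_sound[OF sound_hyp, of f r \<sigma> k "(j0, r)" Eq] f
    have "j0 \<in> {1..n}" "\<sigma> j0 = r"
      by (auto simp: A_def answer_def split: if_splits)
    moreover have "alg_output A ?h = j0" by (simp add: A_def alg_def j0_def)
    ultimately show ?thesis by (simp add: succeeds_def)
  qed
  have prob_eq: "measure_pmf.prob D E = (\<Sum>\<sigma>\<in>S. if \<sigma> \<in> E then w \<sigma> else 0)" for E
  proof -
    have "measure_pmf.prob D E = measure_pmf.prob D (S \<inter> E)"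
      using measure_Int_set_pmf[of D E] by (simp add: S_def Int_commute)
    also have "\<dots> = sum w (S \<inter> E)"
      using finS by (simp add: measure_measure_pmf_finite w_def)
    also have "\<dots> = (\<Sum>\<sigma>\<in>S. if \<sigma> \<in> E then w \<sigma> else 0)" using finS by (rule sum.inter_restrict)
    finally show ?thesis .
  qed
  have prob: "p \<le> measure_pmf.prob D {\<sigma>. succeeds A n k r \<sigma>}"
  proof -
    have "p \<le> real (m k) / real n"
      using m_bounds[of k] assms(1,2) by (simp add: c_def le_divide_eq mult.commute)
    also have "\<dots> \<le> F (m k)" using F_lb m_le by blast
    also have "\<dots> = (\<Sum>\<sigma>\<in>S. w \<sigma> * e \<sigma> (m k))" using F_eq m_le by simp
    also have "\<dots> \<le> (\<Sum>\<sigma>\<in>S. if \<sigma> \<in> {\<sigma>. succeeds A n k r \<sigma>} then w \<sigma> else 0)"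
      by (rule sum_mono) (use succ w0 in \<open>auto simp: e_def\<close>)
    also have "\<dots> = measure_pmf.prob D {\<sigma>. succeeds A n k r \<sigma>}" by (simp add: prob_eq)
    finally show ?thesis .
  qed
  define d where "d t = real (m (Suc t)) - real (m t)" for t
  have d0: "0 \<le> d t" for t using mmono by (simp add: d_def monoD)
  have nq: "real (num_queries A k \<sigma>) = (\<Sum>t<k. d t * (1 - e \<sigma> (m t)))" for \<sigma>
  proof -
    have "real (num_queries A k \<sigma>) = (\<Sum>t<k. real (card (alg_queries A (hist A \<sigma> t))))"
      by (simp add: num_queries_def)
    also have "\<dots> = (\<Sum>t<k. d t * (1 - e \<sigma> (m t)))"
    proof (rule sum.cong)
      fix t
      have "m t \<le> m (Suc t)" using mmono by (simp add: monoD)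
      then show "real (card (alg_queries A (hist A \<sigma> t))) = d t * (1 - e \<sigma> (m t))"
        using hist_card[where t=t and r=r and \<sigma>=\<sigma>, OF mmono m0 \<pi>_inj m_le]
        by (auto simp: A_def d_def e_def of_nat_diff)
    qed simp
    finally show ?thesis .
  qed
  have expect: "measure_pmf.expectation D (\<lambda>\<sigma>. real (num_queries A k \<sigma>))
      = (\<Sum>t<k. d t * (1 - F (m t)))"
  proof -
    have "measure_pmf.expectation D (\<lambda>\<sigma>. real (num_queries A k \<sigma>))
        = (\<Sum>\<sigma>\<in>S. w \<sigma> * real (num_queries A k \<sigma>))"
      using integral_measure_pmf[of S D "\<lambda>\<sigma>. real (num_queries A k \<sigma>)"] finS
      by (simp add: S_def w_def)
    also have "\<dots> = (\<Sum>\<sigma>\<in>S. \<Sum>t<k. d t * (w \<sigma> - w \<sigma> * e \<sigma> (m t)))"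
      by (simp add: nq sum_distrib_left algebra_simps)
    also have "\<dots> = (\<Sum>t<k. \<Sum>\<sigma>\<in>S. d t * (w \<sigma> - w \<sigma> * e \<sigma> (m t)))" by (rule sum.swap)
    also have "\<dots> = (\<Sum>t<k. d t * ((\<Sum>\<sigma>\<in>S. w \<sigma>) - (\<Sum>\<sigma>\<in>S. w \<sigma> * e \<sigma> (m t))))"
      by (simp only: sum_distrib_left[symmetric] sum_subtractf)
    also have "\<dots> = (\<Sum>t<k. d t * (1 - F (m t)))" using w1 F_eq m_le by simp
    finally show ?thesis .
  qed
  have "(\<Sum>t<k. d t * (1 - F (m t))) \<le> (\<Sum>t<k. d t * (1 - real t * c / real n))"
  proof (rule sum_mono)
    fix t assume "t \<in> {..<k}"
    then have "real t * c \<le> real (m t)" using m_bounds by simp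
    then have "real t * c / real n \<le> real (m t) / real n" by (simp add: divide_right_mono)
    then have "1 - F (m t) \<le> 1 - real t * c / real n" using F_lb[OF m_le[of t]] by linarith
    then show "d t * (1 - F (m t)) \<le> d t * (1 - real t * c / real n)"
      using d0 by (rule mult_left_mono)
  qed
  also have "\<dots> \<le> real n * p * (1 - (real k - 1) / (2 * real k) * p) + 1"
    unfolding d_def
    by (rule arith_bound[OF assms(2,1,3,4) c_def]) (use m0 m_bounds in auto)
  finally have "measure_pmf.expectation D (\<lambda>\<sigma>. real (num_queries A k \<sigma>))
      \<le> real n * p * (1 - (real k - 1) / (2 * real k) * p) + 1" using expect by simp
  then show ?thesis using valid prob by blast
qed

end
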